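(* For every odd $N\ge3$ we have ${}'\mathcal X^-_{N-2}={}^\sharp\mathcal X^-_{N-2}$.
   Context: For an odd integer $M\ge3$ the following objects are defined (we write $[i,j]=\{h\in\mathbb Z:i\le h\le j\}$, empty if $i>j$). A $2$-element subset $\{i,j\}\subseteq[1,M]$ is written $ij$ when either ($i<j$ and $j-i$ odd) or ($i>j$ and $i-j$ even); each $2$-element subset has exactly one such writing. Let $\mathcal P_M$ be the set of all finite sets $B$ of pairwise disjoint $2$-element subsets of $[1,M]$; for $B\in\mathcal P_M$ let $B^0=\{\{i,j\}\in B: i-j\text{ even}\}$, $B^1=\{\{i,j\}\in B: i-j\text{ odd}\}$. A set $X\subseteq[1,M]$ is $0$-covered by $B^1$ if there are $a_1b_1,\dots,a_sb_s\in B^1$ ($s\ge0$, so $a_r<b_r$) with $X=[a_1,b_1]\sqcup\dots\sqcup[a_s,b_s]$ (disjoint union). Let ${}^*\mathcal P_M$ be the set of $B\in\mathcal P_M$ such that: for every $ij\in B^1$, $[i+1,j-1]$ is $0$-covered by $B^1$; and there is a sequence $(i_1,\dots,i_{2s})$ in $[1,M]$ with $B^0=\{i_{2s}i_1,i_{2s-1}i_2,\dots,i_{s+1}i_s\}$ ($s=|B^0|$; unique) such that, if $s\ge1$, each of $[i_1+1,i_2-1],\dots,[i_{s-1}+1,i_s-1],[i_{s+1}+1,i_{s+2}-1],\dots,[i_{2s-1}+1,i_{2s}-1]$ is $0$-covered by $B^1$. Let $\mathcal X^-_{M-2}$ be the set of $B\in{}^*\mathcal P_M$ such that: either $s=0$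 or both $[1,i_1-1]$ and $[i_{2s}+1,M]$ are $0$-covered by $B^1$; and if $s$ is even then $\{i,M\}\in B$ for some even $i$, if $s$ is odd then $\{i,M\}\in B$ for some odd $i$. Let ${}'\mathcal X^-_{M-2}$ be the set of $B\in\mathcal X^-_{M-2}$ with $|B^0|$ even (equivalently, $\{i,M\}\in B$ for some even $i$). For odd $M\ge5$ and $k\in[1,M-1]$ let $\iota_k:[1,M-2]\to[1,M]$ be $\iota_k(i)=i$ for $i<k$ and $\iota_k(i)=i+2$ for $i\ge k$, and let $I_k:\mathcal P_{M-2}\to\mathcal P_M$ send $B$ to $\{\{\iota_k(a),\iota_k(b)\}:\{a,b\}\in B\}\cup\{\{k,k+1\}\}$. Let ${}'Pr^-_{M-2}\subseteq\mathcal P_M$ consist of $\{\{M-1,M\}\}$ and of the sets $\{\{M-1,M\},\{M-2,1\},\{M-3,2\},\dots,\{M-1-\tau,\tau\}\}$ for even $\tau\in[2,(M-3)/2]$. Define ${}^\sharp\mathcal X^-_{M-2}\subseteq\mathcal P_M$ recursively: ${}^\sharp\mathcal X^-_1=\{\{\{2,3\}\}\}\subseteq\mathcal P_3$; for $M\ge5$, $B\in\mathcal P_M$ lies in ${}^\sharp\mathcal X^-_{M-2}$ iff either $B\in{}'Pr^-_{M-2}$ or $B=I_k(B')$ for some $B'\in{}^\sharp\mathcal X^-_{M-4}$ and $k\in[1,M-2]$. *)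

theory Defs
  imports Main
begin

definition PM :: "nat \<Rightarrow> nat set set set" where
  "PM M = {B. finite B \<and> (\<forall>p\<in>B. p \<subseteq> {1..M} \<and> card p = 2)
                \<and> (\<forall>p\<in>B. \<forall>q\<in>B. p \<noteq> q \<longrightarrow> p \<inter> q = {})}"

definition B0 :: "nat set set \<Rightarrow> nat set set" where
  "B0 B = {p \<in> B. even (Max p - Min p)}"

definition B1 :: "nat set set \<Rightarrow> nat set set" where
  "B1 B = {p \<in> B. odd (Max p - Min p)}"

definition zero_covered :: "nat set set \<Rightarrow> nat set \<Rightarrow> bool" where
  "zero_covered B X \<longleftrightarrow> (\<exists>S \<subseteq> B1 B.
      (\<forall>p\<in>S. \<forall>q\<in>S. p \<noteq> q \<longrightarrow> {Min p..Max p} \<inter> {Min q..Max q} = {})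
      \<and> X = (\<Union>p\<in>S. {Min p..Max p}))"

text \<open>The sequence (i_1,...,i_{2s}) (increasing, hence unique) with
  B^0 = {i_{2s} i_1, ..., i_{s+1} i_s}.\<close>
definition nest_seq :: "nat set set \<Rightarrow> nat \<Rightarrow> (nat \<Rightarrow> nat) \<Rightarrow> bool" where
  "nest_seq B s i \<longleftrightarrow> strict_mono_on {1..2*s} i
      \<and> B0 B = {{i (2*s + 1 - r), i r} | r. r \<in> {1..s}}"

definition seq_covered :: "nat set set \<Rightarrow> nat \<Rightarrow> (nat \<Rightarrow> nat) \<Rightarrow> bool" where
  "seq_covered B s i \<longleftrightarrow>
      (\<forall>r \<in> {1..<s}. zero_covered B {i r + 1 .. i (r+1) - 1})
    \<and> (\<forall>r \<in> {s+1..<2*s}. zero_covered B {i r + 1 .. i (r+1) - 1})"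

definition starP :: "nat \<Rightarrow> nat set set set" where
  "starP M = {B \<in> PM M.
      (\<forall>p \<in> B1 B. zero_covered B {Min p + 1 .. Max p - 1})
    \<and> (\<exists>i. nest_seq B (card (B0 B)) i \<and> seq_covered B (card (B0 B)) i)}"

text \<open>Xminus M is the set called X^-_{M-2} in the paper.\<close>
definition Xminus :: "nat \<Rightarrow> nat set set set" where
  "Xminus M = {B \<in> starP M.
      (let s = card (B0 B) in
        (s = 0 \<or> (\<exists>i. nest_seq B s i \<and> zero_covered B {1 .. i 1 - 1}
                              \<and> zero_covered B {i (2*s) + 1 .. M}))
      \<and> (even s \<longrightarrow> (\<exists>j. even j \<and> {j, M} \<in> B))
      \<and> (odd s \<longrightarrow> (\<exists>j. odd j \<and> {j, M} \<in> B)))}"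

text \<open>primeXminus M is the set called 'X^-_{M-2} in the paper.\<close>
definition primeXminus :: "nat \<Rightarrow> nat set set set" where
  "primeXminus M = {B \<in> Xminus M. even (card (B0 B))}"

definition iota :: "nat \<Rightarrow> nat \<Rightarrow> nat" where
  "iota k i = (if i < k then i else i + 2)"

definition Ik :: "nat \<Rightarrow> nat set set \<Rightarrow> nat set set" where
  "Ik k B = {iota k ` p | p. p \<in> B} \<union> {{k, k+1}}"

text \<open>primePr M is the set called 'Pr^-_{M-2} in the paper.\<close>
definition primePr :: "nat \<Rightarrow> nat set set set" where
  "primePr M = {{{M-1, M}}} \<union>
     {{{M-1, M}} \<union> {{M - 1 - r, r} | r. r \<in> {1..\<tau>}} | \<tau>.
        even \<tau> \<and> 2 \<le> \<tau> \<and> \<tau> \<le> (M - 3) div 2}"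

text \<open>sharpX M is the set called #X^-_{M-2} in the paper (relevant for odd M >= 3).\<close>
fun sharpX :: "nat \<Rightarrow> nat set set set" where
  "sharpX M = (if M \<le> 3 then (if M = 3 then {{{2,3}}} else {})
     else primePr M \<union> {Ik k B' | k B'. k \<in> {1..M-2} \<and> B' \<in> sharpX (M - 2)})"

declare sharpX.simps [simp del]

end

theory Submission
  imports Defs
begin


definition uniota :: "nat \<Rightarrow> nat \<Rightarrow> nat" where
  "uniota k z = (if z < k then z else z - 2)"

lemma iota_less_iff[simp]: "iota k x < iota k y \<longleftrightarrow> x < y"
  by (auto simp: iota_def)
lemma iota_le_iff[simp]: "iota k x \<le> iota k y \<longleftrightarrow> x \<le> y"
  by (auto simp: iota_def)
lemma iota_eq_iff[simp]: "iota k x = iota k y \<longleftrightarrow> x = y"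
  by (auto simp: iota_def)
lemma inj_iota: "inj (iota k)" by (auto simp: inj_def)
lemma iota_ne[simp]: "iota k x \<noteq> k" "iota k x \<noteq> Suc k"
  by (auto simp: iota_def)
lemma iota_uniota: "z \<noteq> k \<Longrightarrow> z \<noteq> Suc k \<Longrightarrow> iota k (uniota k z) = z"
  by (auto simp: iota_def uniota_def)
lemma uniota_iota[simp]: "uniota k (iota k x) = x"
  by (auto simp: iota_def uniota_def)
lemma iota_even[simp]: "even (iota k x) \<longleftrightarrow> even x"
  by (auto simp: iota_def)
lemma uniota_even: "z \<noteq> k \<Longrightarrow> z \<noteq> Suc k \<Longrightarrow> even (uniota k z) \<longleftrightarrow> even z"
  by (metis iota_even iota_uniota)
lemma iota_diff_odd: "a \<le> b \<Longrightarrow> odd (iota k b - iota k a) \<longleftrightarrow> odd (b - a)"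
  by (auto simp: iota_def)
lemma mono_iota: "mono (iota k)"
  by (auto simp: mono_def)
lemma Min_iota: "finite p \<Longrightarrow> p \<noteq> {} \<Longrightarrow> Min (iota k ` p) = iota k (Min p)"
  by (simp add: mono_Min_commute mono_iota)
lemma Max_iota: "finite p \<Longrightarrow> p \<noteq> {} \<Longrightarrow> Max (iota k ` p) = iota k (Max p)"
  by (simp add: mono_Max_commute mono_iota)

lemma split_iota: "Y = iota k ` (iota k -` Y) \<union> (Y \<inter> {k, Suc k})"
proof
  show "Y \<subseteq> iota k ` (iota k -` Y) \<union> (Y \<inter> {k, Suc k})"
  proof
    fix z assume z: "z \<in> Y"
    show "z \<in> iota k ` (iota k -` Y) \<union> (Y \<inter> {k, Suc k})"
    proof (cases "z = k \<or> z = Suc k")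
      case True then show ?thesis using z by auto
    next
      case False
      then have "iota k (uniota k z) = z" by (simp add: iota_uniota)
      then show ?thesis using z by (metis UnI1 image_eqI vimageI)
    qed
  qed
qed auto

lemma set_eq_iota:
  assumes "iota k -` Y = iota k -` Z" "Y \<inter> {k, Suc k} = Z \<inter> {k, Suc k}"
  shows "Y = Z"
  using split_iota[of Y k] split_iota[of Z k] assms by metis

lemma vimage_iota_interval: "iota k -` {iota k a .. iota k b} = {a..b}"
  by auto

lemma iota_interval_k: "k \<in> {iota k a .. iota k b} \<longleftrightarrow> a < k \<and> k \<le> b"
  by (auto simp: iota_def)
lemma iota_interval_Suck: "Suc k \<in> {iota k a .. iota k b} \<longleftrightarrow> a < k \<and> k \<le> b"
  by (auto simp: iota_def)

lemma vimage_iota_kk[simp]: "iota k -` {k, Suc k} = {}"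
  by auto

lemma vimage_iota_k: "iota k -` {k..Suc k} = {}"
  by (auto simp: iota_def split: if_splits)

lemma image_Ik: "p \<in> Ik k B' \<longleftrightarrow> p = {k, k+1} \<or> (\<exists>p0\<in>B'. p = iota k ` p0)"
  by (auto simp: Ik_def)



lemma B1_Ik:
  assumes fin: "\<forall>p\<in>B'. finite p \<and> p \<noteq> {}"
  shows "B1 (Ik k B') = (\<lambda>p. iota k ` p) ` B1 B' \<union> {{k, Suc k}}"
proof -
  have "odd (Max (iota k ` p) - Min (iota k ` p)) \<longleftrightarrow> odd (Max p - Min p)" if "p \<in> B'" for p
    using fin that by (simp add: Min_iota Max_iota iota_diff_odd)
  then show ?thesis by (auto simp: B1_def Ik_def)
qed

lemma B0_Ik:
  assumes fin: "\<forall>p\<in>B'. finite p \<and> p \<noteq> {}"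
  shows "B0 (Ik k B') = (\<lambda>p. iota k ` p) ` B0 B'"
proof -
  have "even (Max (iota k ` p) - Min (iota k ` p)) \<longleftrightarrow> even (Max p - Min p)" if "p \<in> B'" for p
    using fin that by (simp add: Min_iota Max_iota iota_diff_odd)
  then show ?thesis by (auto simp: B0_def Ik_def)
qed

lemma I_iota:
  assumes "finite p" "p \<noteq> {}"
  shows "{Min (iota k ` p) .. Max (iota k ` p)} = {iota k (Min p) .. iota k (Max p)}"
  using assms by (simp add: Min_iota Max_iota)

lemma zc_transfer1:
  assumes fin: "\<forall>p\<in>B'. finite p \<and> p \<noteq> {}"
  and zc: "zero_covered (Ik k B') X"
  shows "zero_covered B' (iota k -` X)"
proof -
  obtain S where S: "S \<subseteq> B1 (Ik k B')"
    and dis: "\<forall>p\<in>S. \<forall>q\<in>S. p \<noteq> q \<longrightarrow> {Min p..Max p} \<inter> {Min q..Max q} = {}"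
    and X: "X = (\<Union>p\<in>S. {Min p..Max p})"
    using zc unfolding zero_covered_def by blast
  define S' where "S' = (\<lambda>p. iota k -` p) ` (S - {{k, Suc k}})"
  have key: "\<exists>p0\<in>B1 B'. p = iota k ` p0" if "p \<in> S - {{k, Suc k}}" for p
    using that S B1_Ik[OF fin] by blast
  have pre: "iota k -` (iota k ` p0) = p0" for p0
    by (simp add: inj_iota inj_vimage_image_eq)
  have B1sub: "B1 B' \<subseteq> B'" by (auto simp: B1_def)
  have Ipre: "iota k -` {Min p..Max p} = {Min (iota k -` p)..Max (iota k -` p)}"
    if pS: "p \<in> S - {{k, Suc k}}" for p
  proof -
    obtain p0 where p0: "p0 \<in> B1 B'" "p = iota k ` p0" using key[OF pS] by blast
    have "finite p0" "p0 \<noteq> {}" using fin p0(1) B1sub by auto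
    then show ?thesis using p0(2) pre by (simp add: I_iota vimage_iota_interval)
  qed
  have kk: "iota k -` {Min {k, Suc k}..Max {k, Suc k}} = {}"
    using vimage_iota_k by simp
  show ?thesis unfolding zero_covered_def
  proof (intro exI conjI)
    show "S' \<subseteq> B1 B'"
      using key pre unfolding S'_def by fastforce
    show "\<forall>p\<in>S'. \<forall>q\<in>S'. p \<noteq> q \<longrightarrow> {Min p..Max p} \<inter> {Min q..Max q} = {}"
    proof (intro ballI impI)
      fix p' q' assume p': "p' \<in> S'" and q': "q' \<in> S'" and ne: "p' \<noteq> q'"
      obtain p where p: "p \<in> S - {{k, Suc k}}" "p' = iota k -` p" using p' S'_def by blast
      obtain q where q: "q \<in> S - {{k, Suc k}}" "q' = iota k -` q" using q' S'_def by blast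
      have "p \<noteq> q" using ne p q by blast
      then have "{Min p..Max p} \<inter> {Min q..Max q} = {}" using dis p q by blast
      then have "iota k -` ({Min p..Max p} \<inter> {Min q..Max q}) = {}" by simp
      then show "{Min p'..Max p'} \<inter> {Min q'..Max q'} = {}"
        using Ipre[OF p(1)] Ipre[OF q(1)] p q by (simp only: vimage_Int)
    qed
    show "iota k -` X = (\<Union>p\<in>S'. {Min p..Max p})"
    proof -
      have "iota k -` X = (\<Union>p\<in>S. iota k -` {Min p..Max p})" using X by auto
      also have "\<dots> = (\<Union>p\<in>S - {{k, Suc k}}. iota k -` {Min p..Max p})"
        using kk by blast
      also have "\<dots> = (\<Union>p\<in>S - {{k, Suc k}}. {Min (iota k -` p)..Max (iota k -` p)})"
        using Ipre by auto
      also have "\<dots> = (\<Union>p\<in>S'. {Min p..Max p})" unfolding S'_def by simp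
      finally show ?thesis .
    qed
  qed
qed

lemma zc_transfer2:
  assumes fin: "\<forall>p\<in>B'. finite p \<and> p \<noteq> {}"
  and kX: "k \<in> X \<longleftrightarrow> Suc k \<in> X"
  and conv: "\<And>u v. u \<in> X \<Longrightarrow> v \<in> X \<Longrightarrow> u < k \<Longrightarrow> Suc k < v \<Longrightarrow> k \<in> X"
  and zc: "zero_covered B' (iota k -` X)"
  shows "zero_covered (Ik k B') X"
proof -
  obtain S' where Sall: "S' \<subseteq> B1 B' \<and> (\<forall>p\<in>S'. \<forall>q\<in>S'. p \<noteq> q \<longrightarrow> {Min p..Max p} \<inter> {Min q..Max q} = {})
     \<and> iota k -` X = (\<Union>p\<in>S'. {Min p..Max p})"
    using zc unfolding zero_covered_def by (rule exE)
  then have S': "S' \<subseteq> B1 B'"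
    and dis: "\<forall>p\<in>S'. \<forall>q\<in>S'. p \<noteq> q \<longrightarrow> {Min p..Max p} \<inter> {Min q..Max q} = {}"
    and X: "iota k -` X = (\<Union>p\<in>S'. {Min p..Max p})" by simp_all
  have B1sub: "B1 B' \<subseteq> B'" by (auto simp: B1_def)
  have finS: "finite p" "p \<noteq> {}" if "p \<in> S'" for p using that S' B1sub fin by auto
  define S1 where "S1 = (\<lambda>p. iota k ` p) ` S'"
  define U where "U = (\<Union>p\<in>S1. {Min p..Max p})"
  have Ip: "{Min (iota k ` p)..Max (iota k ` p)} = {iota k (Min p)..iota k (Max p)}" if "p \<in> S'" for p
    using finS[OF that] by (rule I_iota)
  have MM: "Min p \<le> Max p" if "p \<in> S'" for p using finS[OF that] by simp
  have U_eq: "U = (\<Union>p\<in>S'. {iota k (Min p)..iota k (Max p)})"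
  proof -
    have "U = (\<Union>p\<in>S'. {Min (iota k ` p)..Max (iota k ` p)})" unfolding U_def S1_def by simp
    also have "\<dots> = (\<Union>p\<in>S'. {iota k (Min p)..iota k (Max p)})"
      by (rule SUP_cong[OF refl], rule Ip)
    finally show ?thesis .
  qed
  have Upre: "iota k -` U = iota k -` X"
    unfolding U_eq X by auto
  have Uk: "k \<in> U \<longleftrightarrow> (\<exists>p\<in>S'. Min p < k \<and> k \<le> Max p)"
    unfolding U_eq by (simp only: UN_iff iota_interval_k)
  have USk: "Suc k \<in> U \<longleftrightarrow> (\<exists>p\<in>S'. Min p < k \<and> k \<le> Max p)"
    unfolding U_eq by (simp only: UN_iff iota_interval_Suck)
  have UkX: "k \<in> X" if kU: "k \<in> U"
  proof -
    obtain p where p: "p \<in> S'" "Min p < k" "k \<le> Max p" using kU Uk by blast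
    have "Min p \<in> {Min p..Max p}" "Max p \<in> {Min p..Max p}" using p by auto
    then have "Min p \<in> (\<Union>p\<in>S'. {Min p..Max p})" "Max p \<in> (\<Union>p\<in>S'. {Min p..Max p})"
      using p(1) by blast+
    then have "Min p \<in> iota k -` X" "Max p \<in> iota k -` X" unfolding X .
    moreover have "iota k (Min p) = Min p" "iota k (Max p) = Max p + 2"
      using p by (auto simp: iota_def)
    ultimately have "Min p \<in> X" "Max p + 2 \<in> X" by auto
    then show ?thesis using conv p by fastforce
  qed
  have disS1: "{Min p..Max p} \<inter> {Min q..Max q} = {}" if pqS1: "p \<in> S1" "q \<in> S1" "p \<noteq> q" for p q
  proof -
    obtain p' q' where pq: "p' \<in> S'" "q' \<in> S'" "p = iota k ` p'" "q = iota k ` q'"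
      using pqS1 S1_def by blast
    then have ne: "p' \<noteq> q'" using pqS1 by blast
    then have d: "{Min p'..Max p'} \<inter> {Min q'..Max q'} = {}" using dis pq by blast
    define Z where "Z = {Min p..Max p} \<inter> {Min q..Max q}"
    have Zeq: "Z = {iota k (Min p')..iota k (Max p')} \<inter> {iota k (Min q')..iota k (Max q')}"
      unfolding Z_def pq(3,4) Ip[OF pq(1)] Ip[OF pq(2)] ..
    have "iota k -` Z = {}" using d unfolding Zeq by (simp only: vimage_Int vimage_iota_interval)
    moreover have "Z \<inter> {k, Suc k} = {}"
    proof -
      have "\<not> (Min p' < k \<and> k \<le> Max p' \<and> Min q' < k \<and> k \<le> Max q')"
        using d by auto
      then have "k \<notin> Z" "Suc k \<notin> Z"
        unfolding Zeq by (simp_all only: Int_iff iota_interval_k iota_interval_Suck) blast+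
      then show ?thesis by blast
    qed
    ultimately have "Z = {}" using set_eq_iota[of k Z "{}"] by simp
    then show ?thesis unfolding Z_def .
  qed
  have S1sub: "S1 \<subseteq> B1 (Ik k B')" unfolding S1_def using S' B1_Ik[OF fin] by blast
  have kkB1: "{k, Suc k} \<in> B1 (Ik k B')" using B1_Ik[OF fin] by blast
  show ?thesis
  proof (cases "k \<in> U \<or> k \<notin> X")
    case True
    have UU: "k \<in> U \<longleftrightarrow> Suc k \<in> U" using Uk USk by simp
    have "U \<inter> {k, Suc k} = X \<inter> {k, Suc k}"
      using True UkX UU kX by auto
    then have "X = U" using set_eq_iota[OF Upre] by simp
    show ?thesis unfolding zero_covered_def
    proof (intro exI conjI)
      show "S1 \<subseteq> B1 (Ik k B')" by (rule S1sub)
      show "\<forall>p\<in>S1. \<forall>q\<in>S1. p \<noteq> q \<longrightarrow> {Min p..Max p} \<inter> {Min q..Max q} = {}"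
        using disS1 by blast
      show "X = (\<Union>p\<in>S1. {Min p..Max p})" using \<open>X = U\<close> unfolding U_def .
    qed
  next
    case False
    then have nk: "k \<notin> U" "Suc k \<notin> U" and kx: "k \<in> X" "Suc k \<in> X" 
      using Uk USk kX by simp_all
    define S where "S = insert {k, Suc k} S1"
    have Ikk: "{Min {k, Suc k}..Max {k, Suc k}} = {k, Suc k}" by auto
    have "iota k -` X = iota k -` (U \<union> {k, Suc k})"
      unfolding vimage_Un vimage_iota_kk using Upre by simp
    moreover have "X \<inter> {k, Suc k} = (U \<union> {k, Suc k}) \<inter> {k, Suc k}" using kx by auto
    ultimately have XU: "X = U \<union> {k, Suc k}" by (rule set_eq_iota)
    show ?thesis unfolding zero_covered_def
    proof (intro exI conjI)
      show "S \<subseteq> B1 (Ik k B')" unfolding S_def using S1sub kkB1 by blast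
      show "\<forall>p\<in>S. \<forall>q\<in>S. p \<noteq> q \<longrightarrow> {Min p..Max p} \<inter> {Min q..Max q} = {}"
      proof (intro ballI impI)
        fix p q assume pS: "p \<in> S" and qS: "q \<in> S" and ne: "p \<noteq> q"
        have sub: "{Min r..Max r} \<subseteq> U" if "r \<in> S1" for r unfolding U_def using that by blast
        have dk: "{Min r..Max r} \<inter> {Min {k, Suc k}..Max {k, Suc k}} = {}" if "r \<in> S1" for r
          unfolding Ikk using sub[OF that] nk by blast
        show "{Min p..Max p} \<inter> {Min q..Max q} = {}"
        proof (cases "p = {k, Suc k}")
          case True
          then have "q \<in> S1" using qS ne S_def by blast
          then show ?thesis using dk True by (simp add: Int_commute)
        next
          case False
          then have p1: "p \<in> S1" using pS S_def by blast
          show ?thesis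
          proof (cases "q = {k, Suc k}")
            case True
            then show ?thesis using dk[OF p1] by blast
          next
            case False
            then have "q \<in> S1" using qS S_def by blast
            then show ?thesis using disS1 p1 ne by blast
          qed
        qed
      qed
      show "X = (\<Union>p\<in>S. {Min p..Max p})" unfolding S_def XU U_def UN_insert Ikk by (rule Un_commute)
    qed
  qed
qed

lemma zc_transfer:
  assumes fin: "\<forall>p\<in>B'. finite p \<and> p \<noteq> {}"
  and kX: "k \<in> X \<longleftrightarrow> Suc k \<in> X"
  and conv: "\<And>u v. u \<in> X \<Longrightarrow> v \<in> X \<Longrightarrow> u < k \<Longrightarrow> Suc k < v \<Longrightarrow> k \<in> X"
  shows "zero_covered (Ik k B') X \<longleftrightarrow> zero_covered B' (iota k -` X)"
proof
  assume a: "zero_covered (Ik k B') X"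
  show "zero_covered B' (iota k -` X)" using fin a by (rule zc_transfer1)
next
  assume a: "zero_covered B' (iota k -` X)"
  show "zero_covered (Ik k B') X" using fin kX conv a by (rule zc_transfer2)
qed



lemma PM_fin: "B \<in> PM M \<Longrightarrow> p \<in> B \<Longrightarrow> finite p \<and> p \<noteq> {}"
  unfolding PM_def by (auto simp: card_ge_0_finite)

lemma iota_bound: "1 \<le> k \<Longrightarrow> k \<le> M - 2 \<Longrightarrow> x \<in> {1..M-2} \<Longrightarrow> iota k x \<in> {1..M}"
  by (auto simp: iota_def)

lemma PM_Ik:
  assumes B': "B' \<in> PM (M - 2)" and k: "1 \<le> k" "k \<le> M - 2"
  shows "Ik k B' \<in> PM M"
proof -
  have fin: "finite B'" and sub: "\<forall>p\<in>B'. p \<subseteq> {1..M-2} \<and> card p = 2"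
    and dis: "\<forall>p\<in>B'. \<forall>q\<in>B'. p \<noteq> q \<longrightarrow> p \<inter> q = {}"
    using B' unfolding PM_def by auto
  have "finite (Ik k B')" unfolding Ik_def using fin by simp
  moreover have "\<forall>p\<in>Ik k B'. p \<subseteq> {1..M} \<and> card p = 2"
  proof
    fix p assume "p \<in> Ik k B'"
    then consider "p = {k, Suc k}" | p0 where "p0 \<in> B'" "p = iota k ` p0"
      unfolding image_Ik by auto
    then show "p \<subseteq> {1..M} \<and> card p = 2"
    proof cases
      case 1 then show ?thesis using k by auto
    next
      case 2
      have "card p = card p0" using 2 card_image[OF inj_on_subset[OF inj_iota subset_UNIV]] by simp
      moreover have "p \<subseteq> {1..M}" using 2 sub iota_bound[OF k] by blast
      ultimately show ?thesis using 2 sub by auto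
    qed
  qed
  moreover have "\<forall>p\<in>Ik k B'. \<forall>q\<in>Ik k B'. p \<noteq> q \<longrightarrow> p \<inter> q = {}"
  proof (intro ballI impI)
    fix p q assume p: "p \<in> Ik k B'" and q: "q \<in> Ik k B'" and ne: "p \<noteq> q"
    have r: "x \<in> iota k ` p0 \<Longrightarrow> x \<noteq> k \<and> x \<noteq> Suc k" for x p0 by auto
    from p consider "p = {k, Suc k}" | p0 where "p0 \<in> B'" "p = iota k ` p0"
      unfolding image_Ik by auto
    then show "p \<inter> q = {}"
    proof cases
      case 1
      from q ne 1 obtain q0 where "q0 \<in> B'" "q = iota k ` q0" unfolding image_Ik by auto
      then show ?thesis using 1 r by blast
    next
      case 2
      from q consider "q = {k, Suc k}" | q0 where "q0 \<in> B'" "q = iota k ` q0"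
        unfolding image_Ik by auto
      then show ?thesis
      proof cases
        case 1 then show ?thesis using 2 r by blast
      next
        case 3: 2
        then have "p0 \<noteq> q0" using 2 ne by blast
        then have "p0 \<inter> q0 = {}" using dis 2 3 by blast
        then show ?thesis using 2 3 by (simp add: image_Int[OF inj_iota, symmetric])
      qed
    qed
  qed
  ultimately show ?thesis unfolding PM_def by blast
qed

lemma zc_empty: "zero_covered B {}"
  unfolding zero_covered_def by (intro exI[of _ "{}"]) auto

lemma zc_interval:
  assumes fin: "\<forall>p\<in>B'. finite p \<and> p \<noteq> {}"
  shows "zero_covered (Ik k B') {iota k x + 1 .. iota k y - 1} \<longleftrightarrow> zero_covered B' {x+1 .. y-1}"
proof -
  have pre: "iota k -` {iota k x + 1 .. iota k y - 1} = {x+1 .. y-1}"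
    by (auto simp: iota_def split: if_splits)
  have kX: "k \<in> {iota k x + 1 .. iota k y - 1} \<longleftrightarrow> Suc k \<in> {iota k x + 1 .. iota k y - 1}"
    by (auto simp: iota_def split: if_splits)
  show ?thesis using zc_transfer[OF fin kX] pre by auto
qed

lemma setcompr_image: "{f r | r. r \<in> A} = f ` A" by auto

lemma inj_img: "inj (\<lambda>p. iota k ` p)"
  using inj_iota by (simp add: inj_def inj_image_eq_iff)

lemma card_B0_Ik:
  assumes fin: "\<forall>p\<in>B'. finite p \<and> p \<noteq> {}"
  shows "card (B0 (Ik k B')) = card (B0 B')"
proof -
  have "B0 (Ik k B') = (\<lambda>p. iota k ` p) ` B0 B'" using fin by (rule B0_Ik)
  then show ?thesis using card_image[OF inj_on_subset[OF inj_img subset_UNIV]] by simp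
qed

lemma nest_seq_iff:
  assumes fin: "\<forall>p\<in>B'. finite p \<and> p \<noteq> {}"
  shows "nest_seq (Ik k B') s (iota k \<circ> i) \<longleftrightarrow> nest_seq B' s i"
proof -
  have sm: "strict_mono_on {1..2*s} (iota k \<circ> i) \<longleftrightarrow> strict_mono_on {1..2*s} i"
    by (simp add: strict_mono_on_def)
  have e: "{{(iota k \<circ> i) (2*s + 1 - r), (iota k \<circ> i) r} | r. r \<in> {1..s}}
      = (\<lambda>p. iota k ` p) ` {{i (2*s + 1 - r), i r} | r. r \<in> {1..s}}"
    unfolding setcompr_image image_image by simp
  have b0: "B0 (Ik k B') = (\<lambda>p. iota k ` p) ` B0 B'" using fin by (rule B0_Ik)
  show ?thesis unfolding nest_seq_def sm e b0
    using inj_img by (simp add: inj_image_eq_iff)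
qed

lemma nest_seq_cong:
  assumes "\<forall>r\<in>{1..2*s}. j r = j' r"
  shows "nest_seq B s j \<longleftrightarrow> nest_seq B s j'"
proof -
  have "strict_mono_on {1..2*s} j \<longleftrightarrow> strict_mono_on {1..2*s} j'"
    using assms by (simp add: strict_mono_on_def)
  moreover have "{{j (2*s + 1 - r), j r} | r. r \<in> {1..s}} = {{j' (2*s + 1 - r), j' r} | r. r \<in> {1..s}}"
  proof -
    have "\<forall>r\<in>{1..s}. j (2*s + 1 - r) = j' (2*s + 1 - r) \<and> j r = j' r"
    proof
      fix r assume r: "r \<in> {1..s}"
      then have "2*s + 1 - r \<in> {1..2*s}" "r \<in> {1..2*s}" by auto
      then show "j (2*s + 1 - r) = j' (2*s + 1 - r) \<and> j r = j' r" using assms by blast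
    qed
    then show ?thesis unfolding setcompr_image by (intro image_cong) auto
  qed
  ultimately show ?thesis unfolding nest_seq_def by simp
qed

lemma seq_covered_cong:
  assumes "\<forall>r\<in>{1..2*s}. j r = j' r"
  shows "seq_covered B s j \<longleftrightarrow> seq_covered B s j'"
proof -
  have a: "\<forall>r\<in>{1..<s}. j r = j' r \<and> j (r+1) = j' (r+1)" using assms by auto
  have b: "\<forall>r\<in>{s+1..<2*s}. j r = j' r \<and> j (r+1) = j' (r+1)" using assms by auto
  show ?thesis unfolding seq_covered_def using a b by auto
qed

lemma seq_covered_iff:
  assumes fin: "\<forall>p\<in>B'. finite p \<and> p \<noteq> {}"
  shows "seq_covered (Ik k B') s (iota k \<circ> i) \<longleftrightarrow> seq_covered B' s i"
proof -
  note zi = zc_interval[OF fin]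
  show ?thesis unfolding seq_covered_def o_apply zi ..
qed

lemma nest_seq_range:
  assumes fin: "\<forall>p\<in>B'. finite p \<and> p \<noteq> {}"
  and ns: "nest_seq (Ik k B') s j" and r: "r \<in> {1..2*s}"
  shows "j r \<noteq> k \<and> j r \<noteq> Suc k"
proof -
  obtain r0 where r0: "r0 \<in> {1..s}" "r = r0 \<or> r = 2*s + 1 - r0"
  proof (cases "r \<le> s")
    case True then show ?thesis using that r by auto
  next
    case False
    then have "2*s + 1 - r \<in> {1..s}" "r = 2*s + 1 - (2*s + 1 - r)" using r by auto
    then show ?thesis using that by blast
  qed
  have "{j (2*s + 1 - r0), j r0} \<in> B0 (Ik k B')" using ns r0(1) unfolding nest_seq_def by blast
  moreover have b0: "B0 (Ik k B') = (\<lambda>p. iota k ` p) ` B0 B'" using fin by (rule B0_Ik)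
  ultimately obtain p where "{j (2*s + 1 - r0), j r0} = iota k ` p" by blast
  moreover have "j r \<in> {j (2*s + 1 - r0), j r0}" using r0(2) by auto
  ultimately obtain x where "j r = iota k x" by blast
  then show ?thesis by simp
qed

lemma uniota_agree:
  assumes fin: "\<forall>p\<in>B'. finite p \<and> p \<noteq> {}"
  and ns: "nest_seq (Ik k B') s j"
  shows "\<forall>r\<in>{1..2*s}. (iota k \<circ> (uniota k \<circ> j)) r = j r"
  using nest_seq_range[OF fin ns] iota_uniota by simp



lemma ex_transfer:
  assumes fin: "\<forall>p\<in>B'. finite p \<and> p \<noteq> {}"
  and Q: "\<And>i. P (iota k \<circ> i) \<longleftrightarrow> P' i"
  and cong: "\<And>j j'. \<forall>r\<in>{1..2*s}. j r = j' r \<Longrightarrow> P j \<Longrightarrow> P j'"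
  and ns: "\<And>j. P j \<Longrightarrow> nest_seq (Ik k B') s j"
  shows "(\<exists>j. P j) \<longleftrightarrow> (\<exists>i. P' i)"
proof
  assume "\<exists>j. P j"
  then obtain j where j: "P j" by blast
  have "\<forall>r\<in>{1..2*s}. (iota k \<circ> (uniota k \<circ> j)) r = j r"
    using uniota_agree[OF fin ns[OF j]] .
  then have "\<forall>r\<in>{1..2*s}. j r = (iota k \<circ> (uniota k \<circ> j)) r" by simp
  then have "P (iota k \<circ> (uniota k \<circ> j))" using cong j by blast
  then show "\<exists>i. P' i" using Q by blast
next
  assume "\<exists>i. P' i"
  then show "\<exists>j. P j" using Q by blast
qed

lemma B1_interior_iff:
  assumes fin: "\<forall>p\<in>B'. finite p \<and> p \<noteq> {}"
  shows "(\<forall>p\<in>B1 (Ik k B'). zero_covered (Ik k B') {Min p + 1 .. Max p - 1})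
     \<longleftrightarrow> (\<forall>p\<in>B1 B'. zero_covered B' {Min p + 1 .. Max p - 1})"
proof -
  have b1: "B1 (Ik k B') = (\<lambda>p. iota k ` p) ` B1 B' \<union> {{k, Suc k}}" using fin by (rule B1_Ik)
  have kk: "zero_covered (Ik k B') {Min {k, Suc k} + 1 .. Max {k, Suc k} - 1}"
    using zc_empty by simp
  have B1sub: "B1 B' \<subseteq> B'" by (auto simp: B1_def)
  have e: "zero_covered (Ik k B') {Min (iota k ` p) + 1 .. Max (iota k ` p) - 1}
      \<longleftrightarrow> zero_covered B' {Min p + 1 .. Max p - 1}" if "p \<in> B1 B'" for p
  proof -
    have "finite p" "p \<noteq> {}" using fin that B1sub by auto
    then have "Min (iota k ` p) = iota k (Min p)" "Max (iota k ` p) = iota k (Max p)"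
      by (simp_all add: Min_iota Max_iota)
    then show ?thesis using zc_interval[OF fin, of k "Min p" "Max p"] by simp
  qed
  show ?thesis unfolding b1 using kk e by auto
qed

lemma partner_iff:
  assumes k: "1 \<le> k" "k \<le> M - 2" and M: "3 \<le> M"
  shows "(\<exists>j. even j \<and> {j, M} \<in> Ik k B') \<longleftrightarrow> (\<exists>j. even j \<and> {j, M - 2} \<in> B')"
proof
  have iM: "iota k (M - 2) = M" using k M by (auto simp: iota_def)
  assume "\<exists>j. even j \<and> {j, M} \<in> Ik k B'"
  then obtain j where j: "even j" "{j, M} \<in> Ik k B'" by blast
  have "{j, M} \<noteq> {k, Suc k}" using k M by (auto simp: doubleton_eq_iff)
  then obtain p0 where p0: "p0 \<in> B'" "{j, M} = iota k ` p0" using j(2) unfolding image_Ik by auto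
  obtain a where a: "a \<in> p0" "j = iota k a" using p0(2) by (metis imageE insertI1)
  have "p0 = iota k -` (iota k ` p0)" by (simp add: inj_iota inj_vimage_image_eq)
  also have "\<dots> = iota k -` {iota k a, iota k (M - 2)}" using p0(2) a iM by simp
  also have "\<dots> = {a, M - 2}" by auto
  finally have "{a, M - 2} \<in> B'" using p0(1) by simp
  moreover have "even a" using j(1) a by simp
  ultimately show "\<exists>j. even j \<and> {j, M - 2} \<in> B'" by blast
next
  have iM: "iota k (M - 2) = M" using k M by (auto simp: iota_def)
  assume "\<exists>j. even j \<and> {j, M - 2} \<in> B'"
  then obtain a where a: "even a" "{a, M - 2} \<in> B'" by blast
  have "iota k ` {a, M - 2} = {iota k a, M}" using iM by simp
  then have "{iota k a, M} \<in> Ik k B'" using a(2) unfolding image_Ik by metis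
  then show "\<exists>j. even j \<and> {j, M} \<in> Ik k B'" using a(1) iota_even by blast
qed

lemma outer_iff:
  assumes fin: "\<forall>p\<in>B'. finite p \<and> p \<noteq> {}"
  and k: "1 \<le> k" "k \<le> M - 2" and M: "3 \<le> M"
  shows "zero_covered (Ik k B') {1 .. iota k x - 1} \<longleftrightarrow> zero_covered B' {1 .. x - 1}"
    and "zero_covered (Ik k B') {iota k x + 1 .. M} \<longleftrightarrow> zero_covered B' {x + 1 .. M - 2}"
proof -
  have i0: "iota k 0 = 0" using k by (simp add: iota_def)
  have "zero_covered (Ik k B') {iota k 0 + 1 .. iota k x - 1} \<longleftrightarrow> zero_covered B' {0 + 1 .. x - 1}"
    by (rule zc_interval[OF fin])
  then show "zero_covered (Ik k B') {1 .. iota k x - 1} \<longleftrightarrow> zero_covered B' {1 .. x - 1}"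
    using i0 by simp
  have iM: "iota k (M - 1) = M + 1" using k M by (auto simp: iota_def)
  have "zero_covered (Ik k B') {iota k x + 1 .. iota k (M - 1) - 1} \<longleftrightarrow> zero_covered B' {x + 1 .. (M - 1) - 1}"
    by (rule zc_interval[OF fin])
  moreover have "(M - 1) - 1 = M - 2" by simp
  ultimately show "zero_covered (Ik k B') {iota k x + 1 .. M} \<longleftrightarrow> zero_covered B' {x + 1 .. M - 2}"
    using iM by simp
qed



lemma Ik_iff:
  assumes M: "3 \<le> M" and k: "1 \<le> k" "k \<le> M - 2" and B': "B' \<in> PM (M - 2)"
  shows "Ik k B' \<in> primeXminus M \<longleftrightarrow> B' \<in> primeXminus (M - 2)"
proof -
  have fin: "\<forall>p\<in>B'. finite p \<and> p \<noteq> {}" using PM_fin B' by blast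
  define B where "B = Ik k B'"
  have PMB: "B \<in> PM M" unfolding B_def using PM_Ik[OF B' k] .
  define s where "s = card (B0 B')"
  have cs: "card (B0 B) = s" unfolding B_def s_def by (rule card_B0_Ik[OF fin])
  have c1: "(\<forall>p\<in>B1 B. zero_covered B {Min p + 1 .. Max p - 1})
     \<longleftrightarrow> (\<forall>p\<in>B1 B'. zero_covered B' {Min p + 1 .. Max p - 1})"
    unfolding B_def by (rule B1_interior_iff[OF fin])
  have c2: "(\<exists>i. nest_seq B s i \<and> seq_covered B s i) \<longleftrightarrow> (\<exists>i. nest_seq B' s i \<and> seq_covered B' s i)"
    unfolding B_def
  proof (rule ex_transfer[OF fin])
    show "nest_seq (Ik k B') s (iota k \<circ> i) \<and> seq_covered (Ik k B') s (iota k \<circ> i) \<longleftrightarrow>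
          nest_seq B' s i \<and> seq_covered B' s i" for i
      using nest_seq_iff[OF fin] seq_covered_iff[OF fin] by blast
    show "nest_seq (Ik k B') s j' \<and> seq_covered (Ik k B') s j'"
      if "\<forall>r\<in>{1..2*s}. j r = j' r" "nest_seq (Ik k B') s j \<and> seq_covered (Ik k B') s j" for j j'
      using that nest_seq_cong seq_covered_cong by blast
  qed blast
  have c3: "(s = 0 \<or> (\<exists>i. nest_seq B s i \<and> zero_covered B {1 .. i 1 - 1} \<and> zero_covered B {i (2*s) + 1 .. M}))
      \<longleftrightarrow> (s = 0 \<or> (\<exists>i. nest_seq B' s i \<and> zero_covered B' {1 .. i 1 - 1} \<and> zero_covered B' {i (2*s) + 1 .. M - 2}))"
  proof (cases "s = 0")
    case True then show ?thesis by simp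
  next
    case False
    have e: "(\<exists>i. nest_seq B s i \<and> zero_covered B {1 .. i 1 - 1} \<and> zero_covered B {i (2*s) + 1 .. M})
      \<longleftrightarrow> (\<exists>i. nest_seq B' s i \<and> zero_covered B' {1 .. i 1 - 1} \<and> zero_covered B' {i (2*s) + 1 .. M - 2})"
      unfolding B_def
    proof (rule ex_transfer[OF fin])
      show "(nest_seq (Ik k B') s (iota k \<circ> i) \<and> zero_covered (Ik k B') {1 .. (iota k \<circ> i) 1 - 1}
               \<and> zero_covered (Ik k B') {(iota k \<circ> i) (2*s) + 1 .. M}) \<longleftrightarrow>
            (nest_seq B' s i \<and> zero_covered B' {1 .. i 1 - 1} \<and> zero_covered B' {i (2*s) + 1 .. M - 2})" for i
        using nest_seq_iff[OF fin] outer_iff[OF fin k M] by simp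
      show "nest_seq (Ik k B') s j' \<and> zero_covered (Ik k B') {1 .. j' 1 - 1} \<and> zero_covered (Ik k B') {j' (2*s) + 1 .. M}"
        if a: "\<forall>r\<in>{1..2*s}. j r = j' r"
          and b: "nest_seq (Ik k B') s j \<and> zero_covered (Ik k B') {1 .. j 1 - 1} \<and> zero_covered (Ik k B') {j (2*s) + 1 .. M}"
        for j j'
      proof -
        have "1 \<in> {1..2*s}" "2*s \<in> {1..2*s}" using False by auto
        then have "j 1 = j' 1" "j (2*s) = j' (2*s)" using a by auto
        then show ?thesis using b nest_seq_cong[OF a] by simp
      qed
    qed blast
    then show ?thesis by simp
  qed
  have c4: "(\<exists>j. even j \<and> {j, M} \<in> B) \<longleftrightarrow> (\<exists>j. even j \<and> {j, M - 2} \<in> B')"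
    unfolding B_def by (rule partner_iff[OF k M])
  show ?thesis
    unfolding B_def[symmetric] primeXminus_def Xminus_def starP_def Let_def mem_Collect_eq cs s_def[symmetric]
    using PMB B' c1 c2 c3 c4 by auto
qed



lemma range_iota: "range (iota k) = - {k, Suc k}"
proof
  show "range (iota k) \<subseteq> - {k, Suc k}" by auto
  show "- {k, Suc k} \<subseteq> range (iota k)"
  proof
    fix z assume "z \<in> - {k, Suc k}"
    then have "iota k (uniota k z) = z" by (auto intro: iota_uniota)
    then show "z \<in> range (iota k)" by (metis rangeI)
  qed
qed

lemma decompose:
  assumes B: "B \<in> PM M" and kk: "{k, Suc k} \<in> B" and k: "1 \<le> k" "k \<le> M - 2"
  shows "\<exists>B'\<in>PM (M - 2). B = Ik k B'"
proof -
  have fin: "finite B" and sub: "\<forall>p\<in>B. p \<subseteq> {1..M} \<and> card p = 2"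
    and dis: "\<forall>p\<in>B. \<forall>q\<in>B. p \<noteq> q \<longrightarrow> p \<inter> q = {}"
    using B unfolding PM_def by auto
  define B' where "B' = (\<lambda>p. iota k -` p) ` (B - {{k, Suc k}})"
  have rng: "iota k ` (iota k -` p) = p" if "p \<in> B - {{k, Suc k}}" for p
  proof -
    have pB: "p \<in> B" and pne: "p \<noteq> {k, Suc k}" using that by auto
    have "p \<inter> {k, Suc k} = {}" using dis[rule_format, OF pB kk pne] .
    then have "p \<subseteq> range (iota k)" unfolding range_iota by blast
    then show ?thesis by (simp add: image_vimage_eq Int_absorb2)
  qed
  have "Ik k B' = (\<lambda>p. iota k ` (iota k -` p)) ` (B - {{k, Suc k}}) \<union> {{k, Suc k}}"
    unfolding Ik_def B'_def by auto
  also have "\<dots> = (B - {{k, Suc k}}) \<union> {{k, Suc k}}" using rng by simp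
  also have "\<dots> = B" using kk by blast
  finally have eq: "B = Ik k B'" by simp
  have "B' \<in> PM (M - 2)" unfolding PM_def
  proof (intro CollectI conjI)
    show "finite B'" unfolding B'_def using fin by simp
    show "\<forall>p\<in>B'. p \<subseteq> {1..M - 2} \<and> card p = 2"
    proof
      fix p' assume "p' \<in> B'"
      then obtain p where p: "p \<in> B - {{k, Suc k}}" "p' = iota k -` p" unfolding B'_def by blast
      have "card p' = card p" using rng[OF p(1)] p(2) card_image[OF inj_on_subset[OF inj_iota subset_UNIV]]
        by metis
      moreover have "p' \<subseteq> {1..M-2}"
      proof
        fix z assume "z \<in> p'"
        then have "iota k z \<in> p" using p by simp
        moreover have "p \<subseteq> {1..M}" using p(1) sub by blast
        ultimately have "iota k z \<in> {1..M}" by blast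
        then show "z \<in> {1..M-2}" using k by (auto simp: iota_def split: if_splits)
      qed
      ultimately show "p' \<subseteq> {1..M - 2} \<and> card p' = 2" using sub p by auto
    qed
    show "\<forall>p\<in>B'. \<forall>q\<in>B'. p \<noteq> q \<longrightarrow> p \<inter> q = {}"
    proof (intro ballI impI)
      fix p' q' assume "p' \<in> B'" "q' \<in> B'" "p' \<noteq> q'"
      then obtain p q where "p \<in> B" "q \<in> B" "p' = iota k -` p" "q' = iota k -` q" "p \<noteq> q"
        unfolding B'_def by blast
      then show "p' \<inter> q' = {}" using dis[rule_format, of p q] by (simp add: vimage_Int[symmetric])
    qed
  qed
  then show ?thesis using eq by blast
qed

lemma primeX1: "primeXminus 1 = {}"
proof -
  have "B = {}" if "B \<in> PM 1" for B
  proof (rule ccontr)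
    assume "B \<noteq> {}"
    then obtain p where "p \<in> B" by blast
    then have "p \<subseteq> {1..1}" "card p = 2" using that unfolding PM_def by auto
    then have "card p \<le> 1" by (metis card_atLeastAtMost card_mono diff_Suc_1 finite_atLeastAtMost)
    then show False using \<open>card p = 2\<close> by simp
  qed
  then show ?thesis
    unfolding primeXminus_def Xminus_def starP_def Let_def by auto
qed



lemma zc_single: "q \<in> B1 B \<Longrightarrow> zero_covered B {Min q..Max q}"
  unfolding zero_covered_def by (intro exI[of _ "{q}"]) auto

lemma B0B1_cases: "B0 B \<union> B1 B = B" "B0 B \<inter> B1 B = {}"
  by (auto simp: B0_def B1_def)

lemma primePr_single:
  assumes M: "odd M" "3 \<le> M"
  shows "{{M - 1, M}} \<in> primeXminus M"
proof -
  define B where "B = {{M - 1, M}}"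
  have mm: "Min {M - 1, M} = M - 1" "Max {M - 1, M} = M" using M by auto
  have PMB: "B \<in> PM M" unfolding PM_def B_def using M by auto
  have b0: "B0 B = {}" unfolding B0_def B_def using mm M by auto
  have b1: "B1 B = B" unfolding B1_def B_def using mm M by auto
  have c1: "\<forall>p\<in>B1 B. zero_covered B {Min p + 1 .. Max p - 1}"
    unfolding b1 using mm zc_empty by (simp add: B_def)
  have ns: "nest_seq B 0 id" unfolding nest_seq_def b0 by simp
  have sc: "seq_covered B 0 id" unfolding seq_covered_def by simp
  have ev: "even (M - 1)" using M by simp
  have "{M - 1, M} \<in> B" unfolding B_def by simp
  then have pt: "\<exists>j. even j \<and> {j, M} \<in> B" using ev by blast
  show ?thesis
    unfolding B_def[symmetric] primeXminus_def Xminus_def starP_def Let_def mem_Collect_eq b0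
    using PMB c1 ns sc pt by (auto simp: b0)
qed

lemma primePr_tau:
  assumes M: "odd M" "3 \<le> M" and tau: "even \<tau>" "2 \<le> \<tau>" "\<tau> \<le> (M - 3) div 2"
  shows "{{M - 1, M}} \<union> {{M - 1 - r, r} | r. r \<in> {1..\<tau>}} \<in> primeXminus M"
proof -
  define P where "P = {{M - 1 - r, r} | r. r \<in> {1..\<tau>}}"
  define B where "B = {{M - 1, M}} \<union> P"
  have t2: "2 * \<tau> + 3 \<le> M" using tau M by linarith
  have lt: "r < M - 1 - r" if "r \<in> {1..\<tau>}" for r using that t2 by auto
  have mm: "Min {M - 1, M} = M - 1" "Max {M - 1, M} = M" using M by auto
  have mr: "Min {M - 1 - r, r} = r" "Max {M - 1 - r, r} = M - 1 - r" if "r \<in> {1..\<tau>}" for r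
    using lt[OF that] by auto
  have Pimg: "P = (\<lambda>r. {M - 1 - r, r}) ` {1..\<tau>}" unfolding P_def by auto
  have PMB: "B \<in> PM M" unfolding PM_def
  proof (intro CollectI conjI)
    show "finite B" unfolding B_def Pimg by simp
    have cs: "(\<exists>r. r \<in> {1..\<tau>} \<and> p = {M - 1 - r, r}) \<or> p = {M - 1, M}" if "p \<in> B" for p
      using that unfolding B_def P_def by blast
    show "\<forall>p\<in>B. p \<subseteq> {1..M} \<and> card p = 2"
    proof
      fix p assume "p \<in> B"
      then consider r where "r \<in> {1..\<tau>}" "p = {M - 1 - r, r}" | "p = {M - 1, M}" using cs by blast
      then show "p \<subseteq> {1..M} \<and> card p = 2"
      proof cases
        case 1 then show ?thesis using lt[OF 1(1)] by auto
      next
        case 2 then show ?thesis using M by auto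
      qed
    qed
    show "\<forall>p\<in>B. \<forall>q\<in>B. p \<noteq> q \<longrightarrow> p \<inter> q = {}"
    proof (intro ballI impI)
      fix p q assume p: "p \<in> B" and q: "q \<in> B" and ne: "p \<noteq> q"
      consider r where "r \<in> {1..\<tau>}" "p = {M - 1 - r, r}" | "p = {M - 1, M}" using cs p by blast
      then show "p \<inter> q = {}"
      proof cases
        case 1
        consider r' where "r' \<in> {1..\<tau>}" "q = {M - 1 - r', r'}" | "q = {M - 1, M}" using cs q by blast
        then show ?thesis
        proof cases
          case 11: 1
          then have "r \<noteq> r'" using 1 ne by blast
          then show ?thesis using 1 11 t2 by auto
        next
          case 2 then show ?thesis using 1 t2 by auto
        qed
      next
        case 2
        consider r' where "r' \<in> {1..\<tau>}" "q = {M - 1 - r', r'}" | "q = {M - 1, M}" using cs q by blast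
        then show ?thesis
        proof cases
          case 1 then show ?thesis using 2 t2 by auto
        next
          case 22: 2 then show ?thesis using 2 ne by blast
        qed
      qed
    qed
  qed
  have b0: "B0 B = P"
  proof -
    have "even (Max p - Min p)" if "p \<in> P" for p
      using that mr M t2 unfolding Pimg by auto
    moreover have "\<not> even (Max {M - 1, M} - Min {M - 1, M})" using mm M by simp
    ultimately show ?thesis unfolding B0_def B_def by auto
  qed
  have b1: "B1 B = {{M - 1, M}}"
  proof -
    have "\<not> odd (Max p - Min p)" if "p \<in> P" for p
      using that mr M t2 unfolding Pimg by auto
    moreover have "odd (Max {M - 1, M} - Min {M - 1, M})" using mm M by simp
    ultimately show ?thesis unfolding B1_def B_def by auto
  qed
  have inj: "inj_on (\<lambda>r. {M - 1 - r, r}) {1..\<tau>}"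
  proof (rule inj_onI)
    fix r r' assume "r \<in> {1..\<tau>}" "r' \<in> {1..\<tau>}" "{M - 1 - r, r} = {M - 1 - r', r'}"
    then show "r = r'" using mr by metis
  qed
  have cP: "card (B0 B) = \<tau>" unfolding b0 Pimg using card_image[OF inj] by simp
  define i where "i = (\<lambda>r. if r \<le> \<tau> then r else r + (M - 2 - 2 * \<tau>))"
  have ns: "nest_seq B \<tau> i" unfolding nest_seq_def
  proof
    show "strict_mono_on {1..2 * \<tau>} i" unfolding strict_mono_on_def i_def using t2 by auto
    have "i (2 * \<tau> + 1 - r) = M - 1 - r" "i r = r" if "r \<in> {1..\<tau>}" for r
      using that t2 unfolding i_def by auto
    then have "{{i (2 * \<tau> + 1 - r), i r} | r. r \<in> {1..\<tau>}} = P"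
      unfolding P_def by (metis (no_types, lifting))
    then show "B0 B = {{i (2 * \<tau> + 1 - r), i r} | r. r \<in> {1..\<tau>}}" using b0 by simp
  qed
  have sc: "seq_covered B \<tau> i" unfolding seq_covered_def
  proof (intro conjI ballI)
    fix r assume "r \<in> {1..<\<tau>}"
    then have "{i r + 1..i (r + 1) - 1} = {}" unfolding i_def by auto
    then show "zero_covered B {i r + 1..i (r + 1) - 1}" using zc_empty by simp
  next
    fix r assume "r \<in> {\<tau> + 1..<2 * \<tau>}"
    then have "{i r + 1..i (r + 1) - 1} = {}" unfolding i_def using t2 by auto
    then show "zero_covered B {i r + 1..i (r + 1) - 1}" using zc_empty by simp
  qed
  have c1: "\<forall>p\<in>B1 B. zero_covered B {Min p + 1 .. Max p - 1}"
    unfolding b1 using mm zc_empty by simp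
  have left: "zero_covered B {1 .. i 1 - 1}" unfolding i_def using tau zc_empty by simp
  have "i (2 * \<tau>) = M - 2" unfolding i_def using tau t2 by auto
  then have "{i (2 * \<tau>) + 1 .. M} = {Min {M - 1, M}..Max {M - 1, M}}" using mm M by auto
  then have right: "zero_covered B {i (2 * \<tau>) + 1 .. M}" using zc_single[of "{M - 1, M}" B] b1 by simp
  have ev: "even (M - 1)" using M by simp
  have mB: "{M - 1, M} \<in> B" unfolding B_def by simp
  then have pt: "\<exists>j. even j \<and> {j, M} \<in> B" using ev by blast
  show ?thesis
    unfolding P_def[symmetric] B_def[symmetric] primeXminus_def Xminus_def starP_def Let_def mem_Collect_eq cP
    using PMB c1 ns sc left right pt tau by blast
qed

lemma primePr_sub:
  assumes M: "odd M" "3 \<le> M" and B: "B \<in> primePr M"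
  shows "B \<in> primeXminus M"
  using B primePr_single[OF M] primePr_tau[OF M] unfolding primePr_def by blast



lemma card2: "card p = 2 \<Longrightarrow> p = {Min p, Max p} \<and> Min p < Max p"
proof -
  assume "card p = 2"
  then obtain x y where "p = {x, y}" "x \<noteq> y" by (auto simp: card_2_iff)
  then show ?thesis by (cases "x < y") (auto simp: min_def max_def)
qed

lemma zc_elem:
  assumes "zero_covered B X" "x \<in> X"
  shows "\<exists>q\<in>B1 B. x \<in> {Min q..Max q} \<and> {Min q..Max q} \<subseteq> X"
proof -
  obtain S where S: "S \<subseteq> B1 B" "X = (\<Union>p\<in>S. {Min p..Max p})"
    using assms(1) unfolding zero_covered_def by blast
  then obtain q where "q \<in> S" "x \<in> {Min q..Max q}" using assms(2) by blast
  then show ?thesis using S by blast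
qed

lemma zc_only:
  assumes "B1 B = {q0}" "zero_covered B X"
  shows "X = {} \<or> X = {Min q0..Max q0}"
proof -
  obtain S where S: "S \<subseteq> B1 B" "X = (\<Union>p\<in>S. {Min p..Max p})"
    using assms(2) unfolding zero_covered_def by blast
  then have "S = {} \<or> S = {q0}" using assms(1) by (simp add: subset_singleton_iff)
  then show ?thesis using S by auto
qed

lemma B1_only:
  assumes B: "B \<in> PM M"
  and int: "\<forall>p\<in>B1 B. zero_covered B {Min p + 1 .. Max p - 1}"
  and noadj: "\<And>k. 1 \<le> k \<Longrightarrow> k \<le> M - 2 \<Longrightarrow> {k, Suc k} \<notin> B"
  shows "\<forall>p\<in>B1 B. p = {M - 1, M}"
proof -
  have sub: "\<forall>p\<in>B. p \<subseteq> {1..M} \<and> card p = 2" using B unfolding PM_def by auto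
  have B1B: "B1 B \<subseteq> B" by (auto simp: B1_def)
  have "\<forall>p. p \<in> B1 B \<longrightarrow> Max p - Min p = d \<longrightarrow> p = {M - 1, M}" for d
  proof (induction d rule: less_induct)
    case (less d)
    show ?case
    proof (intro allI impI)
      fix p assume p: "p \<in> B1 B" and d: "Max p - Min p = d"
      have pB: "p \<in> B" using p B1B by blast
      then have ps: "p \<subseteq> {1..M}" "card p = 2" using sub by auto
      then have pe: "p = {Min p, Max p}" "Min p < Max p" using card2 by blast+
      have bnd: "1 \<le> Min p" "Max p \<le> M"
        using ps(1) pe by (metis atLeastAtMost_iff insertI1 insert_subset)+
      have "odd (Max p - Min p)" using p unfolding B1_def by blast
      then have od: "odd d" using d by simp
      show "p = {M - 1, M}"
      proof (cases "d = 1")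
        case True
        then have mx: "Max p = Suc (Min p)" using d pe by simp
        have "\<not> Min p \<le> M - 2"
        proof
          assume "Min p \<le> M - 2"
          then have "{Min p, Suc (Min p)} \<notin> B" using noadj bnd by blast
          then show False using pB pe mx by simp
        qed
        then have "Min p = M - 1" "Max p = M" using bnd mx by auto
        then show ?thesis using pe by simp
      next
        case False
        then have d3: "3 \<le> d" using od by presburger
        have "Min p + 1 \<in> {Min p + 1 .. Max p - 1}" using d d3 by auto
        then obtain q where q: "q \<in> B1 B" "Min p + 1 \<in> {Min q..Max q}"
          "{Min q..Max q} \<subseteq> {Min p + 1 .. Max p - 1}"
          using zc_elem int p by blast
        have "Min q \<le> Max q" using q(2) by auto
        then have qb: "Min p + 1 \<le> Min q" "Max q \<le> Max p - 1" using q(3) by auto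
        then have "Max q - Min q < d" using d d3 by auto
        then have "q = {M - 1, M}" using less q(1) by blast
        moreover have "Max {M - 1, M} = M" by simp
        ultimately show ?thesis using qb bnd by simp
      qed
    qed
  qed
  then show ?thesis by blast
qed

lemma ns_points:
  assumes "nest_seq B s i"
  shows "\<Union>(B0 B) = i ` {1..2*s}"
proof -
  have b0: "B0 B = {{i (2*s + 1 - r), i r} | r. r \<in> {1..s}}" using assms unfolding nest_seq_def by blast
  show ?thesis
  proof
    show "\<Union>(B0 B) \<subseteq> i ` {1..2*s}"
    proof
      fix x assume "x \<in> \<Union>(B0 B)"
      then obtain r where r: "r \<in> {1..s}" "x = i (2*s + 1 - r) \<or> x = i r" unfolding b0 by blast
      then have "2*s + 1 - r \<in> {1..2*s}" "r \<in> {1..2*s}" by auto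
      then show "x \<in> i ` {1..2*s}" using r(2) by blast
    qed
    show "i ` {1..2*s} \<subseteq> \<Union>(B0 B)"
    proof
      fix x assume "x \<in> i ` {1..2*s}"
      then obtain r where r: "r \<in> {1..2*s}" "x = i r" by blast
      show "x \<in> \<Union>(B0 B)"
      proof (cases "r \<le> s")
        case True
        then have "{i (2*s + 1 - r), i r} \<in> B0 B" unfolding b0 using r by auto
        then show ?thesis using r by blast
      next
        case False
        then have r': "2*s + 1 - r \<in> {1..s}" "2*s + 1 - (2*s + 1 - r) = r" using r by auto
        then have "{i (2*s + 1 - (2*s + 1 - r)), i (2*s + 1 - r)} \<in> B0 B" unfolding b0 by blast
        then show ?thesis using r r' by auto
      qed
    qed
  qed
qed

lemma ns_min_max:
  assumes "nest_seq B s i" "1 \<le> s"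
  shows "Min (\<Union>(B0 B)) = i 1" "Max (\<Union>(B0 B)) = i (2*s)"
proof -
  have sm: "strict_mono_on {1..2*s} i" using assms unfolding nest_seq_def by blast
  have le: "i 1 \<le> i r \<and> i r \<le> i (2*s)" if r: "r \<in> {1..2*s}" for r
  proof -
    have a: "1 \<in> {1..2*s}" "2*s \<in> {1..2*s}" using assms(2) by auto
    have "i 1 \<le> i r"
    proof (cases "r = 1")
      case False then show ?thesis using sm a r unfolding strict_mono_on_def
        by (metis atLeastAtMost_iff le_less)
    qed simp
    moreover have "i r \<le> i (2*s)"
    proof (cases "r = 2*s")
      case False then show ?thesis using sm a r unfolding strict_mono_on_def
        by (metis atLeastAtMost_iff le_less)
    qed simp
    ultimately show ?thesis by simp
  qed
  have fin: "finite (i ` {1..2*s})" by simp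
  show "Min (\<Union>(B0 B)) = i 1" unfolding ns_points[OF assms(1)]
    by (rule Min_eqI[OF fin]) (use le assms(2) in auto)
  show "Max (\<Union>(B0 B)) = i (2*s)" unfolding ns_points[OF assms(1)]
    by (rule Max_eqI[OF fin]) (use le assms(2) in auto)
qed



lemma noadj_primePr:
  assumes M: "odd M" "3 \<le> M" and B: "B \<in> primeXminus M"
  and noadj: "\<And>k. 1 \<le> k \<Longrightarrow> k \<le> M - 2 \<Longrightarrow> {k, Suc k} \<notin> B"
  shows "B \<in> primePr M"
proof -
  define s where "s = card (B0 B)"
  have PMB: "B \<in> PM M" and int: "\<forall>p\<in>B1 B. zero_covered B {Min p + 1 .. Max p - 1}"
    and ex1: "\<exists>i. nest_seq B s i \<and> seq_covered B s i"
    and ex2: "s = 0 \<or> (\<exists>i. nest_seq B s i \<and> zero_covered B {1 .. i 1 - 1} \<and> zero_covered B {i (2*s) + 1 .. M})"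
    and pt: "\<exists>j. even j \<and> {j, M} \<in> B"
    and evs: "even s"
    using B unfolding primeXminus_def Xminus_def starP_def Let_def mem_Collect_eq s_def by blast+
  have sub: "\<forall>p\<in>B. p \<subseteq> {1..M} \<and> card p = 2" and finB: "finite B"
    and dis: "\<forall>p\<in>B. \<forall>q\<in>B. p \<noteq> q \<longrightarrow> p \<inter> q = {}"
    using PMB unfolding PM_def by auto
  have B1o: "\<forall>p\<in>B1 B. p = {M - 1, M}" using B1_only[OF PMB int noadj] by blast
  obtain j where j: "even j" "{j, M} \<in> B" using pt by blast
  have "card {j, M} = 2" "{j, M} \<subseteq> {1..M}" using sub j(2) by auto
  then have jM: "j < M" by (cases "j = M") auto
  have "Min {j, M} = j" "Max {j, M} = M" using jM by auto
  then have "odd (Max {j, M} - Min {j, M})" using M(1) j(1) jM by simp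
  then have "{j, M} \<in> B1 B" using j(2) unfolding B1_def by blast
  then have mB: "{M - 1, M} \<in> B" using B1o j(2) by metis
  have mm: "Min {M - 1, M} = M - 1" "Max {M - 1, M} = M" using M by auto
  have b1: "B1 B = {{M - 1, M}}"
  proof
    show "B1 B \<subseteq> {{M - 1, M}}" using B1o by blast
    have "odd (Max {M - 1, M} - Min {M - 1, M})" using mm M by simp
    then show "{{M - 1, M}} \<subseteq> B1 B" using mB unfolding B1_def by blast
  qed
  have Bsplit: "B = B0 B \<union> {{M - 1, M}}" using B0B1_cases(1)[of B] b1 by simp
  show ?thesis
  proof (cases "s = 0")
    case True
    have "finite (B0 B)" using finB by (auto simp: B0_def)
    then have "B0 B = {}" using True s_def by simp
    then have "B = {{M - 1, M}}" using Bsplit by simp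
    then show ?thesis unfolding primePr_def by simp
  next
    case False
    then have s1: "1 \<le> s" by simp
    obtain i where ns: "nest_seq B s i" and sc: "seq_covered B s i" using ex1 by blast
    obtain i2 where ns2: "nest_seq B s i2" and l2: "zero_covered B {1 .. i2 1 - 1}"
      and r2: "zero_covered B {i2 (2*s) + 1 .. M}" using ex2 False by blast
    have "i2 1 = i 1" "i2 (2*s) = i (2*s)" using ns_min_max[OF ns s1] ns_min_max[OF ns2 s1] by simp_all
    then have left: "zero_covered B {1 .. i 1 - 1}" and right: "zero_covered B {i (2*s) + 1 .. M}"
      using l2 r2 by simp_all
    have sm: "strict_mono_on {1..2*s} i" using ns unfolding nest_seq_def by blast
    have pts: "1 \<le> i r \<and> i r \<le> M - 2" if r: "r \<in> {1..2*s}" for r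
    proof -
      have "i r \<in> \<Union>(B0 B)" using ns_points[OF ns] r by blast
      then obtain p where p: "p \<in> B0 B" "i r \<in> p" by blast
      have pB: "p \<in> B" using p(1) by (auto simp: B0_def)
      have "p \<noteq> {M - 1, M}" using p(1) b1 B0B1_cases(2)[of B] by blast
      then have "p \<inter> {M - 1, M} = {}" using dis[rule_format, OF pB mB] by blast
      moreover have "p \<subseteq> {1..M}" using sub pB by blast
      ultimately show ?thesis using p(2) by fastforce
    qed
    have zo: "X = {} \<or> X = {M - 1 .. M}" if "zero_covered B X" for X
      using zc_only[OF b1 that] mm by simp
    have gap: "i (Suc r) = Suc (i r)" if r: "r \<in> {1..<s} \<or> r \<in> {s+1..<2*s}" for r
    proof -
      have zr: "zero_covered B {i r + 1 .. i (r+1) - 1}" using sc r unfolding seq_covered_def by blast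
      have rr: "r \<in> {1..2*s}" "Suc r \<in> {1..2*s}" using r by auto
      have lt: "i r < i (Suc r)" using sm rr unfolding strict_mono_on_def by simp
      have "i (Suc r) \<le> M - 2" using pts[OF rr(2)] by simp
      then have "M - 1 \<notin> {i r + 1 .. i (r+1) - 1}" by auto
      then have "{i r + 1 .. i (r+1) - 1} = {}" using zo[OF zr] M by auto
      then show ?thesis using lt by auto
    qed
    have one: "i 1 = 1"
    proof -
      have p1: "1 \<le> i 1 \<and> i 1 \<le> M - 2" using pts s1 by simp
      then have "M - 1 \<notin> {1 .. i 1 - 1}" by auto
      then have "{1 .. i 1 - 1} = {}" using zo[OF left] M by auto
      then show ?thesis using p1 by auto
    qed
    have top: "i (2*s) = M - 2"
    proof -
      have p1: "1 \<le> i (2*s) \<and> i (2*s) \<le> M - 2" using pts s1 by simp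
      then have "M \<in> {i (2*s) + 1 .. M}" using M by auto
      then have e: "{i (2*s) + 1 .. M} = {M - 1 .. M}" using zo[OF right] by auto
      have "i (2*s) + 1 \<in> {i (2*s) + 1 .. M}" using M p1 by auto
      then have "i (2*s) + 1 \<in> {M - 1 .. M}" using e by simp
      then show ?thesis using p1 M by auto
    qed
    have low: "1 \<le> r \<longrightarrow> r \<le> s \<longrightarrow> i r = r" for r
    proof (induction r)
      case (Suc r)
      show ?case
      proof (cases "r = 0")
        case True then show ?thesis using one by simp
      next
        case False
        show ?thesis
        proof (intro impI)
          assume "Suc r \<le> s"
          then have "r \<in> {1..<s}" using False by auto
          then show "i (Suc r) = Suc r" using gap Suc.IH False \<open>Suc r \<le> s\<close> by auto
        qed
      qed
    qed simp
    have high: "d < s \<longrightarrow> i (2*s - d) = M - 2 - d" for d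
    proof (induction d)
      case 0 then show ?case using top by simp
    next
      case (Suc d)
      show ?case
      proof
        assume ds: "Suc d < s"
        then have r: "2*s - Suc d \<in> {s+1..<2*s}" by auto
        have "Suc (2*s - Suc d) = 2*s - d" using ds by auto
        then have "i (2*s - d) = Suc (i (2*s - Suc d))" using gap[of "2*s - Suc d"] r by metis
        moreover have "i (2*s - d) = M - 2 - d" using Suc.IH ds by simp
        ultimately show "i (2*s - Suc d) = M - 2 - Suc d" by linarith
      qed
    qed
    have vals: "i (2*s + 1 - r) = M - 1 - r \<and> i r = r" if r: "r \<in> {1..s}" for r
    proof -
      have "2*s + 1 - r = 2*s - (r - 1)" "r - 1 < s" using r by auto
      then have "i (2*s + 1 - r) = M - 2 - (r - 1)" using high by metis
      moreover have "M - 2 - (r - 1) = M - 1 - r" using r M by auto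
      ultimately show ?thesis using low r by auto
    qed
    have b0: "B0 B = {{M - 1 - r, r} | r. r \<in> {1..s}}"
    proof -
      have "B0 B = {{i (2*s + 1 - r), i r} | r. r \<in> {1..s}}" using ns unfolding nest_seq_def by blast
      also have "\<dots> = {{M - 1 - r, r} | r. r \<in> {1..s}}"
        unfolding setcompr_image using vals by (intro image_cong) auto
      finally show ?thesis .
    qed
    have "i s < i (Suc s)" using sm s1 unfolding strict_mono_on_def by auto
    moreover have "i s = s" using low s1 by simp
    moreover have "i (Suc s) = M - 2 - (s - 1)"
    proof -
      have "Suc s = 2*s - (s - 1)" "s - 1 < s" using s1 by auto
      then show ?thesis using high by metis
    qed
    ultimately have "2*s + 1 < M" by linarith
    then have "2*s + 3 \<le> M" using M(1) evs by presburger
    then have tb: "s \<le> (M - 3) div 2" by linarith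
    have s2: "2 \<le> s" using s1 evs by presburger
    have "B = {{M - 1, M}} \<union> {{M - 1 - r, r} | r. r \<in> {1..s}}" using Bsplit b0 by blast
    then show ?thesis unfolding primePr_def using evs s2 tb by blast
  qed
qed



lemma decomp:
  assumes M: "odd M" "3 \<le> M"
  shows "primeXminus M = primePr M \<union> {Ik k B' | k B'. k \<in> {1..M-2} \<and> B' \<in> primeXminus (M - 2)}"
proof
  show "primeXminus M \<subseteq> primePr M \<union> {Ik k B' | k B'. k \<in> {1..M-2} \<and> B' \<in> primeXminus (M - 2)}"
  proof
    fix B assume B: "B \<in> primeXminus M"
    then have PMB: "B \<in> PM M" unfolding primeXminus_def Xminus_def starP_def by blast
    show "B \<in> primePr M \<union> {Ik k B' | k B'. k \<in> {1..M-2} \<and> B' \<in> primeXminus (M - 2)}"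
    proof (cases "\<exists>k. 1 \<le> k \<and> k \<le> M - 2 \<and> {k, Suc k} \<in> B")
      case True
      then obtain k where k: "1 \<le> k" "k \<le> M - 2" "{k, Suc k} \<in> B" by blast
      obtain B' where B': "B' \<in> PM (M - 2)" "B = Ik k B'" using decompose[OF PMB k(3) k(1) k(2)] by blast
      then have "B' \<in> primeXminus (M - 2)" using Ik_iff[OF M(2) k(1) k(2) B'(1)] B by simp
      then show ?thesis using B' k by auto
    next
      case False
      then have "B \<in> primePr M" using noadj_primePr[OF M B] by blast
      then show ?thesis by blast
    qed
  qed
  show "primePr M \<union> {Ik k B' | k B'. k \<in> {1..M-2} \<and> B' \<in> primeXminus (M - 2)} \<subseteq> primeXminus M"
  proof
    fix B assume "B \<in> primePr M \<union> {Ik k B' | k B'. k \<in> {1..M-2} \<and> B' \<in> primeXminus (M - 2)}"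
    then consider "B \<in> primePr M" | k B' where "k \<in> {1..M-2}" "B' \<in> primeXminus (M - 2)" "B = Ik k B'"
      by blast
    then show "B \<in> primeXminus M"
    proof cases
      case 1 then show ?thesis using primePr_sub[OF M] by blast
    next
      case 2
      have pm: "B' \<in> PM (M - 2)" using 2 unfolding primeXminus_def Xminus_def starP_def by blast
      have "1 \<le> k" "k \<le> M - 2" using 2 by auto
      then show ?thesis using Ik_iff[OF M(2) _ _ pm] 2 by simp
    qed
  qed
qed

theorem theorem4p7:
  fixes N :: nat
  assumes "odd N" and "N \<ge> 3"
  shows "primeXminus N = sharpX N"
  using assms
proof (induction N rule: less_induct)
  case (less N)
  show ?case
  proof (cases "N = 3")
    case True
    have "primePr 3 = {{{2, 3}}}" unfolding primePr_def by auto
    then have "primeXminus 3 = {{{2, 3}}}" using decomp[of 3] primeX1 by simp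
    moreover have "sharpX 3 = {{{2, 3}}}" by (simp add: sharpX.simps)
    ultimately show ?thesis using True by simp
  next
    case False
    then have N5: "5 \<le> N" using less.prems by presburger
    have IH: "primeXminus (N - 2) = sharpX (N - 2)"
      using less.IH[of "N - 2"] less.prems N5 by simp
    have "sharpX N = primePr N \<union> {Ik k B' | k B'. k \<in> {1..N-2} \<and> B' \<in> sharpX (N - 2)}"
      using N5 by (subst sharpX.simps) simp
    then show ?thesis using decomp[OF less.prems] IH by simp
  qed
qed

end
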